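(* Let $0<\alpha_1,\alpha_2\leq 1$ and $\theta=\frac{\alpha_2-\alpha_1}{\alpha_2+\alpha_1}$. Let $f(z)=z+\sum_{n=2}^\infty a_nz^n$ belong to $\mathcal{S}^*_t(\alpha_1,\alpha_2)$. Then $|a_2|\leq(\alpha_1+\alpha_2)\cos\frac{\theta}{2}$, and for $n=3,4,\ldots$, $$|a_n|\leq\frac{\alpha_1+\alpha_2}{n-1}\cos\frac{\theta}{2}\prod_{k=2}^{n-1}\left(1+\frac{\alpha_1+\alpha_2}{k-1}\cos\frac{\theta}{2}\right).$$
   Context: $\Delta=\{z\in\mathbb{C}:|z|<1\}$. $\mathcal{S}^*_t(\alpha_1,\alpha_2)$ denotes the class of functions $f$ analytic in $\Delta$ with $f(0)=0=f'(0)-1$ satisfying $-\frac{\pi\alpha_1}{2}<\arg\left\{\frac{zf'(z)}{f(z)}\right\}<\frac{\pi\alpha_2}{2}$ for all $z\in\Delta$. *)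

theory Defs
  imports "HOL-Complex_Analysis.Complex_Analysis"
begin

text \<open>The class S*_t(alpha1, alpha2): f analytic in the unit disc, f 0 = 0, f'(0) = 1,
  and for all z in the disc, arg (z f'(z)/f(z)) lies strictly between -pi alpha1/2 and pi alpha2/2.
  At z = 0 the quotient is understood by its limit value 1 (arg 1 = 0), which always satisfies
  the condition; for z \<noteq> 0 the expression must be defined, i.e. f z \<noteq> 0, and its
  argument must exist, i.e. the quotient is nonzero.\<close>
definition strongly_starlike_t :: "real \<Rightarrow> real \<Rightarrow> (complex \<Rightarrow> complex) set" where
  "strongly_starlike_t a1 a2 = {f. f holomorphic_on ball 0 1 \<and> f 0 = 0 \<and> deriv f 0 = 1 \<and>
     (\<forall>z\<in>ball 0 1. z \<noteq> 0 \<longrightarrow>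
        f z \<noteq> 0 \<and> z * deriv f z / f z \<noteq> 0 \<and>
        - (pi * a1 / 2) < Arg (z * deriv f z / f z) \<and> Arg (z * deriv f z / f z) < pi * a2 / 2)}"

definition taylor_coeff :: "(complex \<Rightarrow> complex) \<Rightarrow> nat \<Rightarrow> complex" where
  "taylor_coeff f n = (deriv ^^ n) f 0 / of_nat (fact n)"

end

theory Submission
  imports Defs
begin

definition H2 :: "real \<Rightarrow> real \<Rightarrow> complex set" where
  "H2 b1 b2 = {w. 0 < Im (w * cis b1) \<and> Im (w * cis (- b2)) < 0}"

lemma Im_mult_cis: "Im (w * cis b) = cmod w * sin (Arg w + b)"
proof -
  have "w * cis b = rcis (cmod w) (Arg w + b)"
    by (metis rcis_cmod_Arg rcis_def cis_mult mult.assoc)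
  thus ?thesis by (simp add: rcis_def)
qed

lemma sector_imp_H2:
  assumes "0 < b1" "0 < b2" "b1 + b2 \<le> pi" "w \<noteq> 0" "- b1 < Arg w" "Arg w < b2"
  shows "w \<in> H2 b1 b2"
proof -
  have "0 < sin (Arg w + b1)" using assms by (intro sin_gt_zero) auto
  moreover have "sin (Arg w + - b2) < 0"
  proof -
    have "0 < sin (b2 - Arg w)" using assms by (intro sin_gt_zero) auto
    moreover have "sin (Arg w + - b2) = - sin (b2 - Arg w)"
      by (metis minus_diff_eq sin_minus diff_conv_add_uminus)
    ultimately show ?thesis by simp
  qed
  moreover have "0 < cmod w" using assms by simp
  ultimately show ?thesis unfolding H2_def mem_Collect_eq Im_mult_cis
    by (simp add: mult_pos_pos mult_pos_neg)
qed

lemma H2_imp_sector: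
  assumes "0 \<le> b1" "0 \<le> b2" "w \<in> H2 b1 b2"
  shows "w \<noteq> 0 \<and> - b1 < Arg w \<and> Arg w < b2"
proof -
  have w0: "w \<noteq> 0" using assms by (auto simp: H2_def)
  have i1: "0 < Im (w * cis b1)" and i2: "Im (w * cis (- b2)) < 0"
    using assms by (auto simp: H2_def)
  have s1: "0 < sin (Arg w + b1)" using i1 unfolding Im_mult_cis
    by (simp add: zero_less_mult_iff)
  have s2: "sin (Arg w + - b2) < 0" using i2 w0 unfolding Im_mult_cis
    by (simp add: mult_less_0_iff)
  have "- b1 < Arg w"
  proof (rule ccontr)
    assume "\<not> ?thesis"
    have "0 \<le> sin (-(Arg w + b1))"
      using Arg_bounded[of w] \<open>\<not> - b1 < Arg w\<close> assms by (intro sin_ge_zero) auto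
    moreover have "sin (-(Arg w + b1)) = - sin (Arg w + b1)" by (rule sin_minus)
    ultimately show False using s1 by linarith
  qed
  moreover have "Arg w < b2"
  proof (rule ccontr)
    assume "\<not> ?thesis"
    have "0 \<le> sin (Arg w + - b2)"
      using Arg_bounded[of w] \<open>\<not> Arg w < b2\<close> assms by (intro sin_ge_zero) auto
    thus False using s2 by linarith
  qed
  ultimately show ?thesis using w0 by auto
qed

lemma T_props:
  fixes b1 b2 :: real
  assumes b: "0 < b1" "0 < b2" "b1 + b2 \<le> pi"
  defines "\<alpha> \<equiv> (b1 + b2) / pi" and "\<phi> \<equiv> (b2 - b1) / 2"
  defines "u0 \<equiv> cis (- (\<phi> / \<alpha>))"
  defines "U \<equiv> \<lambda>w. exp ((Ln w - \<i> * complex_of_real \<phi>) / complex_of_real \<alpha>)"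
  defines "T \<equiv> \<lambda>w. (U w - u0) / (U w + cnj u0)"
  shows "T holomorphic_on H2 b1 b2" "T 1 = 0" "\<And>w. w \<in> H2 b1 b2 \<Longrightarrow> norm (T w) < 1"
    "(T has_field_derivative (u0 / (complex_of_real \<alpha> * (2 * cos (\<phi> / \<alpha>))))) (at 1)"
proof -
  have apos: "0 < \<alpha>" using b by (simp add: \<alpha>_def)
  have phia: "\<bar>\<phi> / \<alpha>\<bar> < pi / 2"
  proof -
    have "\<phi> / \<alpha> = pi * (b2 - b1) / (2 * (b1 + b2))" using b by (simp add: \<alpha>_def \<phi>_def field_simps)
    moreover have "\<bar>(b2 - b1) / (b1 + b2)\<bar> < 1" using b by (simp add: abs_less_iff field_simps)
    moreover have "pi * (b2 - b1) / (2 * (b1 + b2)) = pi / 2 * ((b2 - b1) / (b1 + b2))" by simp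
    ultimately have "\<bar>\<phi> / \<alpha>\<bar> = pi / 2 * \<bar>(b2 - b1) / (b1 + b2)\<bar>"
      by (simp only: abs_mult) simp
    also have "\<dots> < pi / 2 * 1" using \<open>\<bar>(b2 - b1) / (b1 + b2)\<bar> < 1\<close>
      by (intro mult_strict_left_mono) auto
    finally show ?thesis by simp
  qed
  have cpos: "0 < cos (\<phi> / \<alpha>)" using phia unfolding abs_less_iff by (intro cos_gt_zero_pi) linarith+
  have Reu0: "Re u0 = cos (\<phi> / \<alpha>)" "Re (cnj u0) = cos (\<phi> / \<alpha>)" by (simp_all add: u0_def)
  have Hnp: "H2 b1 b2 \<inter> \<real>\<^sub>\<le>\<^sub>0 = {}"
  proof -
    have "False" if "w \<in> H2 b1 b2" "w \<in> \<real>\<^sub>\<le>\<^sub>0" for w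
    proof -
      have "0 < Im (w * cis b1)" "Re w \<le> 0" "Im w = 0"
        using that by (auto simp: complex_nonpos_Reals_iff H2_def)
      moreover have "0 < sin b1" using b by (intro sin_gt_zero) auto
      ultimately show False using mult_nonpos_nonneg[of "Re w" "sin b1"] by simp
    qed
    thus ?thesis by blast
  qed
  have ReU: "0 < Re (U w)" if w: "w \<in> H2 b1 b2" for w
  proof -
    have s: "w \<noteq> 0" "- b1 < Arg w" "Arg w < b2" using H2_imp_sector[of b1 b2 w] b w by auto
    have "Im ((Ln w - \<i> * complex_of_real \<phi>) / complex_of_real \<alpha>) = (Arg w - \<phi>) / \<alpha>"
      using s by (simp add: Arg_eq_Im_Ln Im_divide_of_real)
    moreover have "\<bar>(Arg w - \<phi>) / \<alpha>\<bar> < pi / 2"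
    proof -
      have "\<bar>Arg w - \<phi>\<bar> < (b1 + b2) / 2" using s b unfolding \<phi>_def abs_less_iff by (simp add: field_simps)
      hence "\<bar>Arg w - \<phi>\<bar> / \<alpha> < (b1 + b2) / 2 / \<alpha>" using apos by (simp add: field_simps)
      also have "(b1 + b2) / 2 / \<alpha> = pi / 2" using b by (simp add: \<alpha>_def field_simps)
      finally show ?thesis using apos by (simp add: abs_divide)
    qed
    ultimately have "0 < cos (Im ((Ln w - \<i> * complex_of_real \<phi>) / complex_of_real \<alpha>))"
      unfolding abs_less_iff by (intro cos_gt_zero_pi) linarith+
    thus ?thesis by (simp add: U_def Re_exp)
  qed
  have den: "U w + cnj u0 \<noteq> 0" if "w \<in> H2 b1 b2" for w
  proof -
    have "0 < Re (U w + cnj u0)" using ReU[OF that] cpos Reu0 by simp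
    thus ?thesis by (metis zero_complex.sel(1) order_less_irrefl)
  qed
  show "T holomorphic_on H2 b1 b2"
    unfolding T_def U_def using den Hnp unfolding U_def
    by (intro holomorphic_intros) auto
  have oneH: "1 \<in> H2 b1 b2" using sector_imp_H2[of b1 b2 1] b by simp
  have U1: "U 1 = u0"
    by (simp add: U_def u0_def cis_conv_exp)
  show "T 1 = 0" by (simp add: T_def U1)
  show "norm (T w) < 1" if w: "w \<in> H2 b1 b2" for w
  proof -
    define x where "x = Re (U w)"
    define y where "y = Im (U w)"
    define c where "c = Re u0"
    define s where "s = Im u0"
    have "norm (U w - u0) < norm (U w + cnj u0)"
    proof -
      have "(x - c)^2 + (y - s)^2 < (x + c)^2 + (y - s)^2"
        using ReU[OF w] cpos Reu0 by (simp add: x_def c_def power2_eq_square algebra_simps)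
      thus ?thesis by (simp add: cmod_def x_def y_def c_def s_def)
    qed
    thus ?thesis by (simp add: T_def norm_divide divide_less_eq_1)
  qed
  have "(U has_field_derivative (u0 / complex_of_real \<alpha>)) (at 1)"
  proof -
    have "(U has_field_derivative (U 1 * (inverse 1 / complex_of_real \<alpha>))) (at 1)"
    proof -
      have "(Ln has_field_derivative inverse 1) (at 1)"
        by (rule has_field_derivative_Ln) (simp add: complex_nonpos_Reals_iff)
      hence "((\<lambda>w. Ln w - \<i> * complex_of_real \<phi>) has_field_derivative (inverse 1 - 0)) (at 1)"
        by (intro DERIV_diff DERIV_const)
      hence "((\<lambda>w. (Ln w - \<i> * complex_of_real \<phi>) / complex_of_real \<alpha>) has_field_derivative (inverse 1 - 0) / complex_of_real \<alpha>) (at 1)"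
        by (rule DERIV_cdivide)
      from DERIV_chain2[OF DERIV_exp this] show ?thesis by (simp add: U_def)
    qed
    thus ?thesis by (simp add: U1)
  qed
  hence "(T has_field_derivative ((u0 / complex_of_real \<alpha>) * (U 1 + cnj u0) - (U 1 - u0) * (u0 / complex_of_real \<alpha>)) / ((U 1 + cnj u0) * (U 1 + cnj u0))) (at 1)"
    unfolding T_def using den[OF oneH]
    by (intro derivative_eq_intros) (auto simp: U1 complex_add_cnj)
  moreover have "u0 + cnj u0 \<noteq> 0" using cpos by (simp add: complex_add_cnj Reu0)
  ultimately show "(T has_field_derivative (u0 / (complex_of_real \<alpha> * (2 * cos (\<phi> / \<alpha>))))) (at 1)"
    by (simp add: U1 complex_add_cnj Reu0 field_simps power2_eq_square)
qed

lemma exists_root_ball: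
  fixes w :: complex assumes "1 \<le> n" "norm w < 1"
  shows "\<exists>z. norm z < 1 \<and> z ^ n = w"
proof (cases "w = 0")
  case True thus ?thesis using assms by (intro exI[of _ 0]) auto
next
  case False
  define z where "z = exp (Ln w / of_nat n)"
  have "z ^ n = exp (of_nat n * (Ln w / of_nat n))" unfolding z_def by (rule exp_of_nat_mult[symmetric])
  also have "\<dots> = w" using assms False by simp
  finally have zn: "z ^ n = w" .
  have "norm z = exp (ln (norm w) / n)" using False by (simp add: z_def norm_exp)
  also have "\<dots> < 1" using assms False by (simp add: divide_neg_pos)
  finally show ?thesis using zn by blast
qed

lemma root_unity_sum:
  assumes n: "1 \<le> n"
  defines "\<omega> \<equiv> exp (2 * of_real pi * \<i> / of_nat n)"
  shows "(\<Sum>j<n. (\<omega> ^ j) ^ m) = (if n dvd m then of_nat n else 0)"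
proof -
  have wm: "\<omega> ^ k = exp (2 * of_real pi * \<i> * of_nat k / of_nat n)" for k
    unfolding \<omega>_def exp_of_nat_mult[symmetric] by (simp add: field_simps)
  have sw: "(\<Sum>j<n. (\<omega> ^ j) ^ m) = (\<Sum>j<n. (\<omega> ^ m) ^ j)"
    by (simp add: power_mult[symmetric] mult.commute)
  show ?thesis
  proof (cases "n dvd m")
    case True
    hence "\<omega> ^ m = 1" using complex_root_unity_eq_1[OF n, of m] wm[of m] by simp
    thus ?thesis using sw True by simp
  next
    case False
    hence ne: "\<omega> ^ m \<noteq> 1" using complex_root_unity_eq_1[OF n, of m] wm[of m] by simp
    have "(\<omega> ^ m) ^ n = (\<omega> ^ n) ^ m" by (simp add: power_mult[symmetric] mult.commute)
    also have "\<omega> ^ n = 1" using complex_root_unity_eq_1[OF n, of n] wm[of n] by simp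
    finally have "(\<omega> ^ m) ^ n = 1" by simp
    thus ?thesis using sw False ne by (simp add: sum_gp_strict)
  qed
qed

lemma convex_H2: "convex (H2 b1 b2)"
  unfolding convex_def H2_def
proof (clarify)
  fix x y :: complex and u v :: real
  assume x: "0 < Im (x * cis b1)" "Im (x * cis (- b2)) < 0"
     and y: "0 < Im (y * cis b1)" "Im (y * cis (- b2)) < 0"
     and uv: "0 \<le> u" "0 \<le> v" "u + v = 1"
  have e: "Im ((u *\<^sub>R x + v *\<^sub>R y) * c) = u * Im (x * c) + v * Im (y * c)" for c
    by (simp add: scaleR_conv_of_real algebra_simps)
  have pos: "0 < u * a + v * b" if "0 < a" "0 < b" for a b :: real
  proof -
    have "0 < u \<or> 0 < v" using uv by linarith
    thus ?thesis using that uv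
      by (metis add_nonneg_pos add_pos_nonneg mult_nonneg_nonneg mult_pos_pos order_less_imp_le)
  qed
  have "0 < u * Im (x * cis b1) + v * Im (y * cis b1)" using pos x(1) y(1) by blast
  moreover have "0 < u * (- Im (x * cis (- b2))) + v * (- Im (y * cis (- b2)))"
    using pos x(2) y(2) by simp
  ultimately show "0 < Im ((u *\<^sub>R x + v *\<^sub>R y) * cis b1) \<and> Im ((u *\<^sub>R x + v *\<^sub>R y) * cis (- b2)) < 0"
    unfolding e by linarith
qed

lemma coeff_bound_generic:
  fixes p T :: "complex \<Rightarrow> complex" and K :: "complex set" and D :: complex and n :: nat
  assumes holp: "p holomorphic_on ball 0 1" and p0: "p 0 = 1"
    and pK: "\<And>z. z \<in> ball 0 1 \<Longrightarrow> p z \<in> K" and K: "convex K"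
    and holT: "T holomorphic_on K" and T1: "T 1 = 0" and Tlt: "\<And>w. w \<in> K \<Longrightarrow> norm (T w) < 1"
    and TD: "(T has_field_derivative D) (at 1)" and n: "1 \<le> n"
  shows "norm (D * fps_nth (fps_expansion p 0) n) \<le> 1"
proof -
  define c where "c m = fps_nth (fps_expansion p 0) m" for m
  have ser: "(\<lambda>m. c m * z^m) sums p z" if "norm z < 1" for z
    using holomorphic_power_series[OF holp, of z] that by (simp add: c_def fps_expansion_def)
  define \<omega> :: complex where "\<omega> = exp (2 * of_real pi * \<i> / of_nat n)"
  have nw: "norm (\<omega> ^ j) = 1" for j by (simp add: \<omega>_def norm_power norm_exp_eq_Re)
  define Q where "Q z = (1 / of_nat n) * (\<Sum>j<n. p (\<omega> ^ j * z))" for z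
  have QK: "Q z \<in> K" if "norm z < 1" for z
  proof -
    have "(\<Sum>j<n. (1 / real n) *\<^sub>R p (\<omega> ^ j * z)) \<in> K"
    proof (rule convex_sum[OF _ K])
      show "(\<Sum>j<n. 1 / real n) = 1" using n by simp
      show "p (\<omega> ^ j * z) \<in> K" if "j \<in> {..<n}" for j
        using pK[of "\<omega> ^ j * z"] that \<open>norm z < 1\<close> by (simp add: norm_mult nw)
    qed auto
    thus ?thesis by (simp add: Q_def scaleR_conv_of_real sum_distrib_left)
  qed
  have Qsum: "(\<lambda>m. if n dvd m then c m * z^m else 0) sums Q z" if z: "norm z < 1" for z
  proof -
    have "(\<lambda>m. \<Sum>j<n. c m * (\<omega> ^ j * z)^m) sums (\<Sum>j<n. p (\<omega> ^ j * z))"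
      by (rule sums_sum, rule ser) (use z in \<open>simp add: norm_mult nw\<close>)
    hence "(\<lambda>m. (1 / of_nat n) * (\<Sum>j<n. c m * (\<omega> ^ j * z)^m)) sums Q z"
      unfolding Q_def by (rule sums_mult)
    moreover have "(1 / of_nat n) * (\<Sum>j<n. c m * (\<omega> ^ j * z)^m) = (if n dvd m then c m * z^m else 0)" for m
    proof -
      have "(\<Sum>j<n. c m * (\<omega> ^ j * z)^m) = c m * z^m * (\<Sum>j<n. (\<omega> ^ j)^m)"
        by (simp add: sum_distrib_left power_mult_distrib algebra_simps)
      also have "\<dots> = c m * z^m * (if n dvd m then of_nat n else 0)"
        using root_unity_sum[OF n, of m] by (simp add: \<omega>_def)
      finally show ?thesis using n by auto
    qed
    ultimately show ?thesis by simp
  qed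
  have Rsum: "(\<lambda>k. c (k * n) * (z ^ n) ^ k) sums Q z" if z: "norm z < 1" for z
  proof -
    have sm: "strict_mono (\<lambda>k::nat. k * n)" using n by (intro strict_monoI) auto
    have "(\<lambda>k. (\<lambda>m. if n dvd m then c m * z^m else 0) (k * n)) sums Q z"
      using Qsum[OF z]
    proof (subst sums_mono_reindex[OF sm])
      show "(\<lambda>m. if n dvd m then c m * z ^ m else 0) m = 0" if "m \<notin> range (\<lambda>k. k * n)" for m
        using that by (auto elim!: dvdE simp: mult.commute)
    qed auto
    thus ?thesis by (simp add: power_mult[symmetric] mult.commute)
  qed
  define Dp where "Dp = Abs_fps (\<lambda>k. c (k * n))"
  have Rw: "\<exists>z. norm z < 1 \<and> (\<lambda>k. fps_nth Dp k * w^k) sums Q z" if w: "norm w < 1" for w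
  proof -
    obtain z where "norm z < 1" "z ^ n = w" using exists_root_ball[OF n w] by blast
    thus ?thesis using Rsum[of z] by (auto simp: Dp_def)
  qed
  have rad: "fps_conv_radius Dp \<ge> 1"
    unfolding fps_conv_radius_def
  proof (rule conv_radius_geI_ex)
    fix r :: real assume r: "0 < r" "ereal r < 1"
    hence "norm (complex_of_real r) < 1" by simp
    then obtain z where "(\<lambda>k. fps_nth Dp k * (complex_of_real r)^k) sums Q z" using Rw by blast
    thus "\<exists>z. norm z = r \<and> summable (\<lambda>k. fps_nth Dp k * z^k)"
      using r by (intro exI[of _ "complex_of_real r"]) (auto simp: sums_iff)
  qed
  define R where "R = eval_fps Dp"
  have RK: "R w \<in> K" if w: "norm w < 1" for w
  proof -
    obtain z where z: "norm z < 1" "(\<lambda>k. fps_nth Dp k * w^k) sums Q z" using Rw[OF w] by blast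
    hence "R w = Q z" by (simp add: R_def eval_fps_def sums_iff)
    thus ?thesis using QK[OF z(1)] by simp
  qed
  have ballsub: "ball (0::complex) 1 \<subseteq> eball 0 (fps_conv_radius Dp)"
  proof (rule subsetI)
    fix z :: complex assume "z \<in> ball 0 1"
    hence "ereal (dist 0 z) < 1" by simp
    hence "ereal (dist 0 z) < fps_conv_radius Dp" using rad by (rule order_less_le_trans)
    thus "z \<in> eball 0 (fps_conv_radius Dp)" by (simp only: in_eball_iff)
  qed
  have holR: "R holomorphic_on ball 0 1"
    unfolding R_def by (rule holomorphic_on_eval_fps[OF ballsub])
  have c0: "c 0 = 1" by (simp add: c_def fps_expansion_def p0)
  have R0: "R 0 = 1" by (simp add: R_def eval_fps_at_0 Dp_def c0)
  have RD: "(R has_field_derivative c n) (at 0)"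
  proof -
    have "ereal (norm (0::complex)) < 1" by simp
    hence "ereal (norm (0::complex)) < fps_conv_radius Dp" using rad by (rule order_less_le_trans)
    from has_field_derivative_eval_fps[OF this, of UNIV]
    have "(eval_fps Dp has_field_derivative eval_fps (fps_deriv Dp) 0) (at 0)" by simp
    moreover have "eval_fps (fps_deriv Dp) 0 = c n"
      unfolding eval_fps_at_0 fps_deriv_nth Dp_def by simp
    ultimately show ?thesis by (simp add: R_def)
  qed
  define \<psi> where "\<psi> = (\<lambda>z. T (R z))"
  have holpsi: "\<psi> holomorphic_on ball 0 1"
  proof -
    have "(T \<circ> R) holomorphic_on ball 0 1"
      by (rule holomorphic_on_compose_gen[OF holR holT]) (use RK in auto)
    thus ?thesis by (simp add: \<psi>_def o_def)
  qed
  have psi0: "\<psi> 0 = 0" by (simp add: \<psi>_def R0 T1)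
  have psilt: "norm (\<psi> z) < 1" if "norm z < 1" for z
    using Tlt[OF RK[OF that]] by (simp add: \<psi>_def)
  have "norm (deriv \<psi> 0) \<le> 1"
    using Schwarz_Lemma(2)[OF holpsi psi0 psilt, of 0] by simp
  moreover have "deriv \<psi> 0 = D * c n"
  proof -
    have "(T has_field_derivative D) (at (R 0))" using TD R0 by simp
    from DERIV_chain2[OF this RD] show ?thesis unfolding \<psi>_def by (rule DERIV_imp_deriv)
  qed
  ultimately show ?thesis by (simp add: c_def)
qed

definition Gb :: "real \<Rightarrow> nat \<Rightarrow> real" where
  "Gb B n = B / real (n - 1) * (\<Prod>k=2..n-1. 1 + B / real (k - 1))"

lemma Gb_aux:
  fixes s1 s2 B P :: real
  assumes "0 < s1" "0 < s2"
  shows "s1 * (B / s1 * P) + B * (B / s1 * P) = s2 * (B / s2 * (P * (1 + B / s1)))"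
  using assms by (simp add: field_simps)

lemma Gb_identity:
  assumes "0 \<le> B"
  shows "B * (1 + (\<Sum>k=2..Suc m. Gb B k)) = real (Suc m) * Gb B (Suc (Suc m))"
proof (induction m)
  case 0
  show ?case by (simp add: Gb_def)
next
  case (Suc m)
  have "B * (1 + (\<Sum>k=2..Suc (Suc m). Gb B k)) = B * (1 + (\<Sum>k=2..Suc m. Gb B k)) + B * Gb B (Suc (Suc m))"
    by (simp add: sum.cl_ivl_Suc algebra_simps)
  also have "\<dots> = real (Suc m) * Gb B (Suc (Suc m)) + B * Gb B (Suc (Suc m))" using Suc by simp
  also have "\<dots> = real (Suc (Suc m)) * Gb B (Suc (Suc (Suc m)))"
  proof -
    define P where "P = (\<Prod>k=2..Suc m. 1 + B / real (k - 1))"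
    have e1: "Gb B (Suc (Suc (Suc m))) = B / real (Suc (Suc m)) * (P * (1 + B / real (Suc m)))"
      by (simp add: Gb_def prod.cl_ivl_Suc P_def)
    have e2: "Gb B (Suc (Suc m)) = B / real (Suc m) * P"
      by (simp add: Gb_def P_def)
    show ?thesis unfolding e1 e2 by (rule Gb_aux) auto
  qed
  finally show ?case .
qed

lemma recursion_bound:
  fixes a :: "nat \<Rightarrow> real" and B :: real
  assumes B: "0 \<le> B" and a1: "a 1 \<le> 1"
    and rec: "\<And>n. 2 \<le> n \<Longrightarrow> real (n - 1) * a n \<le> B * (\<Sum>k=1..n-1. a k)"
  shows "2 \<le> n \<Longrightarrow> a n \<le> Gb B n"
proof (induction n rule: less_induct)
  case (less n)
  then obtain m where m: "n = Suc (Suc m)" by (metis add_2_eq_Suc le_Suc_ex)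
  have "(\<Sum>k=1..n-1. a k) = a 1 + (\<Sum>k=2..Suc m. a k)"
    unfolding m by (simp add: sum.atLeast_Suc_atMost numeral_2_eq_2)
  also have "\<dots> \<le> 1 + (\<Sum>k=2..Suc m. Gb B k)"
    using a1 less.IH m by (intro add_mono sum_mono) auto
  finally have "B * (\<Sum>k=1..n-1. a k) \<le> B * (1 + (\<Sum>k=2..Suc m. Gb B k))"
    using B by (rule mult_left_mono)
  also have "\<dots> = real (Suc m) * Gb B n" using Gb_identity[OF B, of m] m by simp
  finally have "B * (\<Sum>k=1..n-1. a k) \<le> real (Suc m) * Gb B n" .
  moreover have "real (Suc m) * a n \<le> B * (\<Sum>k=1..n-1. a k)"
    using rec[OF less.prems] m by simp
  ultimately have "real (Suc m) * a n \<le> real (Suc m) * Gb B n" by linarith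
  thus ?case by (rule mult_left_le_imp_le) simp
qed

lemma aux_div:
  fixes P d y :: real assumes "y \<noteq> 0"
  shows "P * d / 4 / (y / 2) = P * (d / y) / 2"
  using assms by (simp add: field_simps)

theorem theorem3p2:
  fixes a1 a2 \<theta> :: real and f :: "complex \<Rightarrow> complex"
  assumes "0 < a1" "a1 \<le> 1" "0 < a2" "a2 \<le> 1"
    and "\<theta> = (a2 - a1) / (a2 + a1)"
    and "f \<in> strongly_starlike_t a1 a2"
  shows "norm (taylor_coeff f 2) \<le> (a1 + a2) * cos (\<theta> / 2) \<and>
         (\<forall>n\<ge>3. norm (taylor_coeff f n) \<le>
           (a1 + a2) / real (n - 1) * cos (\<theta> / 2) *
           (\<Prod>k=2..n-1. 1 + (a1 + a2) / real (k - 1) * cos (\<theta> / 2)))"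
proof -
  note a = assms(1-4)
  have holf: "f holomorphic_on ball 0 1" and f0: "f 0 = 0" and df0: "deriv f 0 = 1"
    and cond: "\<And>z. z \<in> ball 0 1 \<Longrightarrow> z \<noteq> 0 \<Longrightarrow> f z \<noteq> 0 \<and> z * deriv f z / f z \<noteq> 0 \<and>
        - (pi * a1 / 2) < Arg (z * deriv f z / f z) \<and> Arg (z * deriv f z / f z) < pi * a2 / 2"
    using assms(6) unfolding strongly_starlike_t_def by auto
  define b1 where "b1 = pi * a1 / 2"
  define b2 where "b2 = pi * a2 / 2"
  have "pi * a1 \<le> pi * 1" "pi * a2 \<le> pi * 1" using a by (intro mult_left_mono; simp)+
  hence b: "0 < b1" "0 < b2" "b1 + b2 \<le> pi"
    using a unfolding b1_def b2_def by (simp_all, linarith)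
  have th1: "\<bar>\<theta>\<bar> < 1"
  proof -
    have "\<bar>a2 - a1\<bar> < \<bar>a2 + a1\<bar>" using a unfolding abs_less_iff by auto
    thus ?thesis unfolding assms(5) abs_divide using a by simp
  qed
  define B where "B = (a1 + a2) * cos (\<theta> / 2)"
  define B' where "B' = (a1 + a2) * cos (pi * \<theta> / 2)"
  have cpos': "0 < cos (pi * \<theta> / 2)"
  proof -
    have "\<bar>pi * \<theta> / 2\<bar> < pi / 2 * 1" using th1 by (simp add: abs_mult)
    thus ?thesis unfolding abs_less_iff by (intro cos_gt_zero_pi) linarith+
  qed
  have BB': "B' \<le> B"
  proof -
    have "cos (pi * \<theta> / 2) = cos \<bar>pi * \<theta> / 2\<bar>" by (simp only: cos_abs_real)
    also have "\<dots> \<le> cos \<bar>\<theta> / 2\<bar>"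
    proof (rule cos_monotone_0_pi_le)
      show "0 \<le> \<bar>\<theta> / 2\<bar>" by simp
      show "\<bar>\<theta> / 2\<bar> \<le> \<bar>pi * \<theta> / 2\<bar>" using pi_ge_two mult_right_mono[of 1 pi "\<bar>\<theta>\<bar>"] by (simp add: abs_mult)
      show "\<bar>pi * \<theta> / 2\<bar> \<le> pi" using th1 by (simp add: abs_mult)
    qed
    also have "\<dots> = cos (\<theta> / 2)" by (simp only: cos_abs_real)
    finally show ?thesis using a by (simp add: B_def B'_def)
  qed
  have B'pos: "0 < B'" using a cpos' by (simp add: B'_def)
  have Bpos: "0 \<le> B" using BB' B'pos by linarith
  define g where "g = (\<lambda>z. if z = 0 then deriv f 0 else (f z - f 0) / (z - 0))"
  have holg: "g holomorphic_on ball 0 1"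
    unfolding g_def by (rule pole_lemma[OF holf]) simp
  have fg: "f w = w * g w" if "w \<in> ball 0 1" for w
    using f0 by (simp add: g_def)
  have gnz: "g w \<noteq> 0" if "w \<in> ball 0 1" for w
    using cond[OF that] df0 by (auto simp: g_def f0)
  define p where "p = (\<lambda>z. 1 + z * deriv g z / g z)"
  have holp: "p holomorphic_on ball 0 1"
    unfolding p_def using gnz
    by (intro holomorphic_intros holomorphic_deriv[OF holg] holg) auto
  have p0: "p 0 = 1" by (simp add: p_def)
  have pq: "p z = z * deriv f z / f z" if z: "z \<in> ball 0 1" "z \<noteq> 0" for z
  proof -
    have "((\<lambda>w. w * g w) has_field_derivative (1 * g z + z * deriv g z)) (at z)"
      using DERIV_mult[OF DERIV_ident holomorphic_derivI[OF holg open_ball z(1)], of UNIV] by (simp add: mult.commute)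
    hence "(f has_field_derivative (1 * g z + z * deriv g z)) (at z)"
      by (rule has_field_derivative_transform_within_open[OF _ open_ball z(1)]) (simp add: fg)
    hence df: "deriv f z = g z + z * deriv g z" by (simp add: DERIV_imp_deriv)
    show ?thesis using gnz[OF z(1)] z(2) by (simp add: p_def df fg[OF z(1)] field_simps)
  qed
  have pH: "p z \<in> H2 b1 b2" if z: "z \<in> ball 0 1" for z
  proof (cases "z = 0")
    case True thus ?thesis using sector_imp_H2[OF b, of 1] b by (simp add: p0)
  next
    case False
    from cond[OF z False] show ?thesis
      using sector_imp_H2[OF b, of "p z"] pq[OF z False] by (simp add: b1_def b2_def)
  qed
  define P where "P = fps_expansion p 0"
  have Pb: "norm (P $ m) \<le> B" if m: "1 \<le> m" for m
  proof -
    define \<alpha> where "\<alpha> = (b1 + b2) / pi"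
    define \<phi> where "\<phi> = (b2 - b1) / 2"
    define u0 where "u0 = cis (- (\<phi> / \<alpha>))"
    define T where "T = (\<lambda>w. (exp ((Ln w - \<i> * complex_of_real \<phi>) / complex_of_real \<alpha>) - u0) /
                 (exp ((Ln w - \<i> * complex_of_real \<phi>) / complex_of_real \<alpha>) + cnj u0))"
    define Dd where "Dd = u0 / (complex_of_real \<alpha> * (2 * cos (\<phi> / \<alpha>)))"
    note TP = T_props[OF b, folded \<alpha>_def \<phi>_def, folded u0_def, folded T_def Dd_def]
    have s1: "a1 + a2 \<noteq> 0" "a2 + a1 \<noteq> 0" using a by auto
    have phi: "\<phi> = pi * (a2 - a1) / 4" by (simp add: \<phi>_def b1_def b2_def field_simps)
    have alpha: "\<alpha> = (a2 + a1) / 2" by (simp add: \<alpha>_def b1_def b2_def field_simps)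
    have e: "\<phi> / \<alpha> = pi * \<theta> / 2" unfolding phi alpha assms(5)
      by (rule aux_div[OF s1(2)])
    have al: "2 * \<alpha> = a1 + a2" by (simp add: \<alpha>_def b1_def b2_def field_simps)
    have "complex_of_real \<alpha> * (2 * cos (\<phi> / \<alpha>)) = complex_of_real B'"
      by (subst e) (simp add: alpha B'_def algebra_simps)
    hence "Dd = u0 / complex_of_real B'" by (simp add: Dd_def)
    hence nD: "norm Dd = 1 / B'" using B'pos by (simp add: norm_divide u0_def)
    have T1: "T 1 = 0" using TP(2) by (simp add: T_def)
    have Tlt: "norm (T w) < 1" if "w \<in> H2 b1 b2" for w using TP(3)[OF that] by (simp add: T_def)
    have "norm (Dd * P $ m) \<le> 1"
      unfolding P_def
      by (rule coeff_bound_generic[OF holp p0 pH convex_H2 TP(1) T1 Tlt TP(4) m])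
    hence "norm (P $ m) / B' \<le> 1" by (simp add: norm_mult nD)
    hence "norm (P $ m) \<le> B'" using B'pos by (simp add: field_simps)
    thus ?thesis using BB' by linarith
  qed
  have P0: "P $ 0 = 1" by (simp add: P_def fps_expansion_def p0)
  define F where "F = fps_expansion f 0"
  have F0: "F $ 0 = 0" by (simp add: F_def fps_expansion_def f0)
  have F1: "F $ 1 = 1" by (simp add: F_def fps_expansion_def df0)
  have hf: "f has_fps_expansion F" unfolding F_def by (rule has_fps_expansion_fps_expansion[OF open_ball _ holf]) simp
  have hp: "p has_fps_expansion P" unfolding P_def by (rule has_fps_expansion_fps_expansion[OF open_ball _ holp]) simp
  have h1: "(\<lambda>z. z * deriv f z) has_fps_expansion fps_X * fps_deriv F"
    by (intro has_fps_expansion_mult has_fps_expansion_fps_X has_fps_expansion_deriv hf)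
  have h2: "(\<lambda>z. p z * f z) has_fps_expansion P * F"
    by (intro has_fps_expansion_mult hf hp)
  have ev: "eventually (\<lambda>z. p z * f z = z * deriv f z) (nhds 0)"
  proof -
    have "eventually (\<lambda>z. z \<in> ball (0::complex) 1) (nhds 0)"
      by (intro eventually_nhds_in_open) auto
    thus ?thesis
    proof eventually_elim
      case (elim z)
      show ?case
      proof (cases "z = 0")
        case True thus ?thesis by (simp add: f0)
      next
        case False thus ?thesis using pq[OF elim False] cond[OF elim False] by simp
      qed
    qed
  qed
  have h2': "(\<lambda>z. z * deriv f z) has_fps_expansion P * F"
    using h2 has_fps_expansion_cong[OF ev refl] by simp
  have eqfps: "fps_X * fps_deriv F = P * F"
    by (rule fps_expansion_unique_complex[OF h1 h2'])
  have rec: "real (n - 1) * norm (F $ n) \<le> B * (\<Sum>k=1..n-1. norm (F $ k))" if n: "2 \<le> n" for n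
  proof -
    obtain m where m: "n = Suc m" "1 \<le> m" using n by (metis Suc_le_D Suc_le_mono one_add_one plus_1_eq_Suc)
    have "of_nat n * F $ n = (fps_X * fps_deriv F) $ n" using m by simp
    also have "\<dots> = (\<Sum>i=0..n. P $ i * F $ (n - i))" by (simp add: eqfps fps_mult_nth)
    also have "\<dots> = F $ n + (\<Sum>i=1..m. P $ i * F $ (n - i))"
      unfolding m(1) using F0 P0 m(2)
      by (simp add: sum.atLeast0_atMost_Suc sum.atLeast_Suc_atMost)
    finally have "of_nat m * F $ n = (\<Sum>i=1..m. P $ i * F $ (n - i))"
      using m by (simp add: algebra_simps)
    hence "real m * norm (F $ n) = norm (\<Sum>i=1..m. P $ i * F $ (n - i))"
      by (metis norm_mult norm_of_nat)
    also have "\<dots> \<le> (\<Sum>i=1..m. norm (P $ i) * norm (F $ (n - i)))"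
      by (rule order_trans[OF norm_sum]) (simp add: norm_mult)
    also have "\<dots> \<le> (\<Sum>i=1..m. B * norm (F $ (n - i)))"
      using Pb by (intro sum_mono mult_right_mono) auto
    also have "\<dots> = B * (\<Sum>i=1..m. norm (F $ (m + 1 - i)))"
      by (simp add: sum_distrib_left m(1))
    also have "(\<Sum>i=1..m. norm (F $ (m + 1 - i))) = (\<Sum>k=1..m. norm (F $ k))"
      by (rule sum.atLeastAtMost_rev[symmetric])
    finally show ?thesis using m by simp
  qed
  have main: "norm (F $ n) \<le> Gb B n" if "2 \<le> n" for n
    by (rule recursion_bound[of B "\<lambda>k. norm (F $ k)", OF Bpos _ rec that]) (use F1 in simp)
  have tc: "taylor_coeff f n = F $ n" for n by (simp add: taylor_coeff_def F_def fps_expansion_def)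
  show ?thesis
  proof
    show "norm (taylor_coeff f 2) \<le> (a1 + a2) * cos (\<theta> / 2)"
      using main[of 2] by (simp add: tc Gb_def B_def)
    show "\<forall>n\<ge>3. norm (taylor_coeff f n) \<le>
           (a1 + a2) / real (n - 1) * cos (\<theta> / 2) *
           (\<Prod>k=2..n-1. 1 + (a1 + a2) / real (k - 1) * cos (\<theta> / 2))"
    proof (intro allI impI)
      fix n :: nat assume "3 \<le> n"
      thus "norm (taylor_coeff f n) \<le>
           (a1 + a2) / real (n - 1) * cos (\<theta> / 2) *
           (\<Prod>k=2..n-1. 1 + (a1 + a2) / real (k - 1) * cos (\<theta> / 2))"
        using main[of n] by (simp add: tc Gb_def B_def)
    qed
  qed
qed

end
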